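(* Let $\pi$ be a permutation and suppose $\pi$ contains an occurrence of the pattern $j_3$ whose underlying classical pattern is $43251$, with shaded boxes $\{(1,4),(1,5),(2,4),(2,5)\}$ and marked region $\{(2,3)\}$. Then the entries of this occurrence playing roles $1,2,3,4$ form, in the same roles, an occurrence in $S(\pi)$ of the mesh pattern $W_2=(3241,\{(1,4)\})$.
   Context: Permutations are in one-line notation. For a sequence $w$ of distinct integers, the stack-sort $S(w)$ is defined by $S(\varepsilon)=\varepsilon$ and $S(\alpha m\beta)=S(\alpha)S(\beta)m$ where $m$ is the largest entry of $w$. An occurrence of a classical pattern $p$ of length $k$ in a permutation $\sigma$ of length $n$ is a set of entries at positions $i_1<\dots<i_k$ whose values are order-isomorphic to $p$; the entry corresponding to letter $r$ of $p$ plays role $r$. With values $v_1<\dots<v_k$ of the occurrence and $i_0=v_0=0$, $i_{k+1}=v_{k+1}=n+1$, the box $(a,b)$ ($0\le a,b\le k$) is the set of entries $\sigma(x)$ with $i_a<x<i_{a+1}$, $v_b<\sigma(x)<v_{b+1}$. A pattern with shaded boxes $R$ and marked region $M$ occurs when an occurrence of the underlying classical pattern has every box in $R$ empty and the union of the boxes in $M$ contains at least one entry; a mesh pattern $(p,R)$ has no marked region. *)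

theory Defs
  imports Main
begin

text \<open>Permutations are nat lists in one-line notation; a permutation of length n
  is a list whose set of entries is {1..n}. Positions are 1-based: entry at position x
  of sigma is sigma ! (x - 1).\<close>

definition is_perm :: "nat list \<Rightarrow> bool" where
  "is_perm w \<longleftrightarrow> distinct w \<and> set w = {1..length w}"

lemma takeWhile_len_less: "x \<in> set w \<Longrightarrow> \<not> P x \<Longrightarrow> length (takeWhile P w) < length w"
  by (induction w) auto

lemma Max_in_list: "w \<noteq> [] \<Longrightarrow> Max (set w) \<in> set w"
  by simp

function stack_sort :: "nat list \<Rightarrow> nat list" where
  "stack_sort w =
     (if w = [] then []
      else (let m = Max (set w);
                \<alpha> = takeWhile (\<lambda>x. x \<noteq> m) w;
                \<beta> = tl (dropWhile (\<lambda>x. x \<noteq> m) w)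
            in stack_sort \<alpha> @ stack_sort \<beta> @ [m]))"
  by pat_completeness auto
termination
proof (relation "measure length")
  fix w :: "nat list" and m \<alpha>
  assume "w \<noteq> []" "m = Max (set w)" "\<alpha> = takeWhile (\<lambda>x. x \<noteq> m) w"
  then show "(\<alpha>, w) \<in> measure length"
    using takeWhile_len_less[of m w "\<lambda>x. x \<noteq> m"] by simp
next
  fix w :: "nat list" and m \<beta>
  assume "w \<noteq> []" "m = Max (set w)" "\<beta> = tl (dropWhile (\<lambda>x. x \<noteq> m) w)"
  then show "(\<beta>, w) \<in> measure length"
    using length_dropWhile_le[of "\<lambda>x. x \<noteq> m" w] by (cases w) auto
qed simp

definition occ :: "nat list \<Rightarrow> nat list \<Rightarrow> nat list \<Rightarrow> bool" where
  "occ \<sigma> p ps \<longleftrightarrow> length ps = length p \<and> sorted_wrt (<) ps \<and>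
     (\<forall>i\<in>set ps. 1 \<le> i \<and> i \<le> length \<sigma>) \<and>
     (\<forall>a<length p. \<forall>b<length p.
        (\<sigma> ! (ps ! a - 1) < \<sigma> ! (ps ! b - 1)) \<longleftrightarrow> (p ! a < p ! b))"

definition box :: "nat list \<Rightarrow> nat list \<Rightarrow> nat \<times> nat \<Rightarrow> nat set" where
  "box \<sigma> ps ab =
     (let n = length \<sigma>;
          ip = 0 # ps @ [n + 1];
          vp = 0 # sort (map (\<lambda>i. \<sigma> ! (i - 1)) ps) @ [n + 1];
          a = fst ab; b = snd ab
      in {x. ip ! a < x \<and> x < ip ! (a + 1) \<and>
             vp ! b < \<sigma> ! (x - 1) \<and> \<sigma> ! (x - 1) < vp ! (b + 1)})"

definition marked_occ ::
  "nat list \<Rightarrow> nat list \<Rightarrow> (nat \<times> nat) set \<Rightarrow> (nat \<times> nat) set \<Rightarrow> nat list \<Rightarrow> bool" where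
  "marked_occ \<sigma> p R M ps \<longleftrightarrow> occ \<sigma> p ps \<and> (\<forall>ab\<in>R. box \<sigma> ps ab = {}) \<and>
     (\<Union>ab\<in>M. box \<sigma> ps ab) \<noteq> {}"

definition mesh_occ :: "nat list \<Rightarrow> nat list \<Rightarrow> (nat \<times> nat) set \<Rightarrow> nat list \<Rightarrow> bool" where
  "mesh_occ \<sigma> p R ps \<longleftrightarrow> occ \<sigma> p ps \<and> (\<forall>ab\<in>R. box \<sigma> ps ab = {})"

end

theory Submission
  imports Defs "HOL-Library.Multiset"
begin
declare stack_sort.simps[simp del]

definition bef :: "nat list \<Rightarrow> nat \<Rightarrow> nat \<Rightarrow> bool" where
  "bef xs u v \<longleftrightarrow> (\<exists>a b c. xs = a @ u # b @ v # c)"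

lemma bef_set: "bef xs u v \<Longrightarrow> u \<in> set xs \<and> v \<in> set xs"
  unfolding bef_def by auto

lemma bef_Cons: "bef xs u v \<Longrightarrow> bef (x # xs) u v"
  unfolding bef_def by (metis append_Cons)

lemma bef_append_imp:
  "bef (A @ B) u v \<Longrightarrow> bef A u v \<or> bef B u v \<or> (u \<in> set A \<and> v \<in> set B)"
proof (induction A)
  case Nil then show ?case by simp
next
  case (Cons x A)
  then obtain a b c where eq: "x # A @ B = a @ u # b @ v # c" unfolding bef_def by auto
  show ?case
  proof (cases a)
    case Nil
    then have xu: "x = u" and eq2: "A @ B = b @ v # c" using eq by auto
    have "v \<in> set A \<or> v \<in> set B" using eq2
      by (metis Un_iff in_set_conv_decomp set_append)
    then show ?thesis
    proof
      assume "v \<in> set A"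
      then obtain b' c' where "A = b' @ v # c'" by (metis split_list)
      then have "bef (x # A) u v" using xu unfolding bef_def by (metis append_Nil append_Cons)
      then show ?thesis by simp
    next
      assume "v \<in> set B" then show ?thesis using xu by simp
    qed
  next
    case (Cons y a')
    then have "A @ B = a' @ u # b @ v # c" using eq by auto
    then have "bef (A @ B) u v" unfolding bef_def by blast
    then have "bef A u v \<or> bef B u v \<or> (u \<in> set A \<and> v \<in> set B)" using Cons.IH by blast
    then show ?thesis using bef_Cons by auto
  qed
qed

lemma bef_append:
  "bef (A @ B) u v \<longleftrightarrow> bef A u v \<or> bef B u v \<or> (u \<in> set A \<and> v \<in> set B)"
proof
  assume "bef (A @ B) u v" then show "bef A u v \<or> bef B u v \<or> (u \<in> set A \<and> v \<in> set B)"
    by (rule bef_append_imp)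
next
  assume "bef A u v \<or> bef B u v \<or> (u \<in> set A \<and> v \<in> set B)"
  then show "bef (A @ B) u v"
  proof (elim disjE conjE)
    assume "bef A u v"
    then obtain a b c where "A = a @ u # b @ v # c" unfolding bef_def by auto
    then have "A @ B = a @ u # b @ v # (c @ B)" by simp
    then show ?thesis unfolding bef_def by blast
  next
    assume "bef B u v"
    then obtain a b c where "B = a @ u # b @ v # c" unfolding bef_def by auto
    then have "A @ B = (A @ a) @ u # b @ v # c" by simp
    then show ?thesis unfolding bef_def by blast
  next
    assume "u \<in> set A" "v \<in> set B"
    then obtain a1 a2 b1 b2 where "A = a1 @ u # a2" "B = b1 @ v # b2" by (metis split_list)
    then have "A @ B = a1 @ u # (a2 @ b1) @ v # b2" by simp
    then show ?thesis unfolding bef_def by blast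
  qed
qed

lemma bef_last: "distinct (A @ [m]) \<Longrightarrow> \<not> bef (A @ [m]) m v"
  unfolding bef_def
  by (auto simp: append_eq_append_conv2 append_eq_Cons_conv Cons_eq_append_conv)

lemma dropWhile_m: "m \<in> set w \<Longrightarrow> dropWhile (\<lambda>x. x \<noteq> m) w = m # tl (dropWhile (\<lambda>x. x \<noteq> m) w)"
  by (induction w) auto

lemma decomp:
  assumes "w \<noteq> []"
  shows "w = takeWhile (\<lambda>x. x \<noteq> Max (set w)) w @ Max (set w) # tl (dropWhile (\<lambda>x. x \<noteq> Max (set w)) w)"
proof -
  have "Max (set w) \<in> set w" using assms by simp
  then show ?thesis using dropWhile_m takeWhile_dropWhile_id by metis
qed

lemma ss_eq:
  assumes "w \<noteq> []"
  shows "stack_sort w = stack_sort (takeWhile (\<lambda>x. x \<noteq> Max (set w)) w) @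
     stack_sort (tl (dropWhile (\<lambda>x. x \<noteq> Max (set w)) w)) @ [Max (set w)]"
  using assms by (subst stack_sort.simps) (simp add: Let_def)

lemma ss_mset: "mset (stack_sort w) = mset w"
proof (induction w rule: stack_sort.induct)
  case (1 w)
  show ?case
  proof (cases "w = []")
    case True then show ?thesis by (simp add: stack_sort.simps)
  next
    case False
    define m where "m = Max (set w)"
    define \<alpha> where "\<alpha> = takeWhile (\<lambda>x. x \<noteq> m) w"
    define \<beta> where "\<beta> = tl (dropWhile (\<lambda>x. x \<noteq> m) w)"
    have w: "mset w = mset (\<alpha> @ m # \<beta>)" using decomp[OF False] unfolding m_def \<alpha>_def \<beta>_def by simp
    have S: "stack_sort w = stack_sort \<alpha> @ stack_sort \<beta> @ [m]"
      using ss_eq[OF False] unfolding m_def \<alpha>_def \<beta>_def .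
    have a: "mset (stack_sort \<alpha>) = mset \<alpha>" using 1(1)[OF False m_def \<alpha>_def \<beta>_def] .
    have b: "mset (stack_sort \<beta>) = mset \<beta>" using 1(2)[OF False m_def \<alpha>_def \<beta>_def] .
    show ?thesis unfolding S w using a b by simp
  qed
qed

lemma ss_set: "set (stack_sort w) = set w"
  by (rule mset_eq_setD[OF ss_mset])

lemma ss_distinct: "distinct w \<Longrightarrow> distinct (stack_sort w)"
  using mset_eq_imp_distinct_iff[OF ss_mset[of w]] by simp

lemma split_unique: "distinct (A @ m # B) \<Longrightarrow> A @ m # B = C @ m # D \<Longrightarrow> A = C \<and> B = D"
proof -
  assume d: "distinct (A @ m # B)" and e: "A @ m # B = C @ m # D"
  have "m \<notin> set A" "m \<notin> set B" using d by auto
  moreover have "distinct (C @ m # D)" using d e by simp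
  then have "m \<notin> set C" "m \<notin> set D" by auto
  ultimately show ?thesis using e append_Cons_eq_iff[of m A B C D] by simp
qed

lemma key:
  "distinct w \<Longrightarrow> w = xs @ u # ys @ v # zs \<Longrightarrow>
     bef (stack_sort w) u v \<longleftrightarrow> (u < v \<or> (\<exists>y\<in>set ys. u < y))"
proof (induction w arbitrary: xs u ys v zs rule: stack_sort.induct)
  case (1 w)
  have ne: "w \<noteq> []" using 1(4) by simp
  define m where "m = Max (set w)"
  define \<alpha> where "\<alpha> = takeWhile (\<lambda>x. x \<noteq> m) w"
  define \<beta> where "\<beta> = tl (dropWhile (\<lambda>x. x \<noteq> m) w)"
  have w: "w = \<alpha> @ m # \<beta>" using decomp[OF ne] unfolding m_def \<alpha>_def \<beta>_def .
  have S: "stack_sort w = stack_sort \<alpha> @ stack_sort \<beta> @ [m]"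
    using ss_eq[OF ne] unfolding m_def \<alpha>_def \<beta>_def .
  have dw: "distinct (\<alpha> @ m # \<beta>)" using 1(3) w by simp
  then have da: "distinct \<alpha>" and db: "distinct \<beta>" by auto
  have IHa: "bef (stack_sort \<alpha>) u v \<longleftrightarrow> (u < v \<or> (\<exists>y\<in>set ys. u < y))"
    if "\<alpha> = xs @ u # ys @ v # zs" for xs u ys v zs
    by (rule 1(1)[OF ne m_def \<alpha>_def \<beta>_def]) (use da that in auto)
  have IHb: "bef (stack_sort \<beta>) u v \<longleftrightarrow> (u < v \<or> (\<exists>y\<in>set ys. u < y))"
    if "\<beta> = xs @ u # ys @ v # zs" for xs u ys v zs
    by (rule 1(2)[OF ne m_def \<alpha>_def \<beta>_def]) (use db that in auto)
  have mx: "\<And>z. z \<in> set w \<Longrightarrow> z \<le> m" unfolding m_def by simp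
  have sa: "set (stack_sort \<alpha>) = set \<alpha>" and sb: "set (stack_sort \<beta>) = set \<beta>" by (simp_all add: ss_set)
  have dS: "distinct (stack_sort w)" using 1(3) ss_distinct by blast
  have eqw: "\<alpha> @ m # \<beta> = xs @ u # ys @ v # zs" using w 1(4) by simp
  have dd: "distinct (xs @ u # ys @ v # zs)" using 1(3) 1(4) by simp
  have "m \<in> set w" using ne unfolding m_def by simp
  then have "m \<in> set xs \<or> m = u \<or> m \<in> set ys \<or> m = v \<or> m \<in> set zs" using 1(4) by auto
  then show ?case
  proof (elim disjE)
    assume "m \<in> set zs"
    then obtain z1 z2 where zs: "zs = z1 @ m # z2" by (metis split_list)
    have "\<alpha> @ m # \<beta> = (xs @ u # ys @ v # z1) @ m # z2" using eqw zs by simp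
    then have ab: "\<alpha> = xs @ u # ys @ v # z1 \<and> \<beta> = z2" by (rule split_unique[OF dw])
    then have a: "\<alpha> = xs @ u # ys @ v # z1" and b: "\<beta> = z2" by simp_all
    have f: "u \<notin> set \<beta>" "u \<noteq> m" "v \<notin> set \<beta>" "v \<noteq> m" using dd unfolding zs b by simp_all
    have n1: "\<not> bef (stack_sort \<beta>) u v" using bef_set[of "stack_sort \<beta>" u v] sb f(1) by blast
    have n2: "\<not> bef [m] u v" using bef_set[of "[m]" u v] f(2) by auto
    have "bef (stack_sort w) u v \<longleftrightarrow> bef (stack_sort \<alpha>) u v"
      unfolding S bef_append using n1 n2 sb f by simp
    then show ?thesis using IHa[OF a] by simp
  next
    assume "m \<in> set xs"
    then obtain x1 x2 where xs: "xs = x1 @ m # x2" by (metis split_list)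
    have "\<alpha> @ m # \<beta> = x1 @ m # (x2 @ u # ys @ v # zs)" using eqw xs by simp
    then have ab: "\<alpha> = x1 \<and> \<beta> = x2 @ u # ys @ v # zs" by (rule split_unique[OF dw])
    then have a: "\<alpha> = x1" and b: "\<beta> = x2 @ u # ys @ v # zs" by simp_all
    have f: "u \<notin> set \<alpha>" "v \<noteq> m" "u \<noteq> m" using dd unfolding xs a by simp_all
    have n1: "\<not> bef (stack_sort \<alpha>) u v" using bef_set[of "stack_sort \<alpha>" u v] sa f(1) by blast
    have n2: "\<not> bef [m] u v" using bef_set[of "[m]" u v] f(3) by auto
    have "bef (stack_sort w) u v \<longleftrightarrow> bef (stack_sort \<beta>) u v"
      unfolding S bef_append using n1 n2 sa f by simp
    then show ?thesis using IHb[OF b] by simp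
  next
    assume mu: "m = u"
    have vw: "v \<in> set w" "v \<noteq> u" using 1(4) dd by auto
    have nb: "\<not> bef (stack_sort w) u v" using bef_last[of "stack_sort \<alpha> @ stack_sort \<beta>" m v] dS S mu by simp
    have ysw: "set ys \<subseteq> set w" using 1(4) by auto
    have "v \<le> m" using mx vw(1) .
    moreover have "\<forall>y\<in>set ys. y \<le> m" using mx ysw by blast
    ultimately have "\<not> (u < v \<or> (\<exists>y\<in>set ys. u < y))" using mu by auto
    then show ?thesis using nb by simp
  next
    assume mv: "m = v"
    have "\<alpha> @ m # \<beta> = (xs @ u # ys) @ m # zs" using eqw mv by simp
    then have "\<alpha> = xs @ u # ys \<and> \<beta> = zs" by (rule split_unique[OF dw])
    then have a: "\<alpha> = xs @ u # ys" by simp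
    have "bef (stack_sort w) u v" unfolding S bef_append using sa a mv by simp
    moreover have "u < v"
    proof -
      have "u \<in> set w" using 1(4) by simp
      then have "u \<le> m" by (rule mx)
      moreover have "u \<noteq> v" using dd by simp
      ultimately show ?thesis using mv by simp
    qed
    ultimately show ?thesis by simp
  next
    assume "m \<in> set ys"
    then obtain y1 y2 where ys: "ys = y1 @ m # y2" by (metis split_list)
    have "\<alpha> @ m # \<beta> = (xs @ u # y1) @ m # (y2 @ v # zs)" using eqw ys by simp
    then have "\<alpha> = xs @ u # y1 \<and> \<beta> = y2 @ v # zs" by (rule split_unique[OF dw])
    then have a: "\<alpha> = xs @ u # y1" and b: "\<beta> = y2 @ v # zs" by simp_all
    have "bef (stack_sort w) u v" unfolding S bef_append using sa sb a b by simp
    moreover have "u < m"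
    proof -
      have "u \<in> set w" using 1(4) by simp
      then have "u \<le> m" by (rule mx)
      moreover have "u \<noteq> m" using dd ys by auto
      ultimately show ?thesis by simp
    qed
    moreover have "m \<in> set ys" using ys by simp
    ultimately have "u < v \<or> (\<exists>y\<in>set ys. u < y)" by blast
    then show ?thesis using \<open>bef (stack_sort w) u v\<close> by simp
  qed
qed

lemma bef_nth:
  assumes "distinct xs" "p < length xs" "q < length xs"
  shows "bef xs (xs ! p) (xs ! q) \<longleftrightarrow> p < q"
proof
  assume "bef xs (xs ! p) (xs ! q)"
  then obtain a b c where e: "xs = a @ xs ! p # b @ xs ! q # c" unfolding bef_def by blast
  have l1: "length a < length xs" using arg_cong[OF e, of length] by simp
  have n1: "xs ! length a = xs ! p" using e by (metis nth_append_length)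
  have l2: "length a + Suc (length b) < length xs" using arg_cong[OF e, of length] by simp
  have n2: "xs ! (length a + Suc (length b)) = xs ! q"
    using e by (metis append_Cons append_assoc length_append length_Cons nth_append_length)
  have "p = length a" using n1 l1 assms nth_eq_iff_index_eq by metis
  moreover have "q = length a + Suc (length b)" using n2 l2 assms nth_eq_iff_index_eq by metis
  ultimately show "p < q" by simp
next
  assume pq: "p < q"
  have e1: "xs = take p xs @ xs ! p # drop (Suc p) xs" using assms(2) id_take_nth_drop by blast
  have l: "q - Suc p < length (drop (Suc p) xs)" using pq assms by simp
  have e2: "drop (Suc p) xs = take (q - Suc p) (drop (Suc p) xs) @ drop (Suc p) xs ! (q - Suc p) # drop (Suc (q - Suc p)) (drop (Suc p) xs)"
    using l id_take_nth_drop by blast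
  have "drop (Suc p) xs ! (q - Suc p) = xs ! q" using pq assms by simp
  then have "xs = take p xs @ xs ! p # take (q - Suc p) (drop (Suc p) xs) @ xs ! q # drop (Suc (q - Suc p)) (drop (Suc p) xs)"
    using e1 e2 by metis
  then show "bef xs (xs ! p) (xs ! q)" unfolding bef_def by blast
qed

lemma bef_iff:
  assumes "distinct xs"
  shows "bef xs u v \<longleftrightarrow> (\<exists>p q. p < q \<and> q < length xs \<and> xs ! p = u \<and> xs ! q = v)"
proof
  assume b: "bef xs u v"
  then have "u \<in> set xs" "v \<in> set xs" using bef_set by auto
  then obtain p q where "p < length xs" "q < length xs" "xs ! p = u" "xs ! q = v"
    by (metis in_set_conv_nth)
  then show "\<exists>p q. p < q \<and> q < length xs \<and> xs ! p = u \<and> xs ! q = v"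
    using b bef_nth[OF assms] by metis
next
  assume "\<exists>p q. p < q \<and> q < length xs \<and> xs ! p = u \<and> xs ! q = v"
  then show "bef xs u v" using bef_nth[OF assms] by (metis less_trans)
qed

lemma bef_asym: "distinct xs \<Longrightarrow> bef xs u v \<Longrightarrow> \<not> bef xs v u"
  unfolding bef_iff by (metis less_trans nth_eq_iff_index_eq order_less_asym)

lemma bef_total: "distinct xs \<Longrightarrow> u \<in> set xs \<Longrightarrow> v \<in> set xs \<Longrightarrow> u \<noteq> v \<Longrightarrow> bef xs u v \<or> bef xs v u"
  unfolding bef_iff by (metis in_set_conv_nth linorder_neqE_nat)

lemma key_nth:
  assumes "distinct w" "i < j" "j < length w"
  shows "bef (stack_sort w) (w ! i) (w ! j) \<longleftrightarrow> (w ! i < w ! j \<or> (\<exists>k. i < k \<and> k < j \<and> w ! i < w ! k))"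
proof -
  have e1: "w = take i w @ w ! i # drop (Suc i) w" using assms id_take_nth_drop by (metis less_trans)
  have l: "j - Suc i < length (drop (Suc i) w)" using assms by simp
  have e2: "drop (Suc i) w = take (j - Suc i) (drop (Suc i) w) @ drop (Suc i) w ! (j - Suc i) # drop (Suc (j - Suc i)) (drop (Suc i) w)"
    using l id_take_nth_drop by blast
  have "drop (Suc i) w ! (j - Suc i) = w ! j" using assms by simp
  then have e: "w = take i w @ w ! i # take (j - Suc i) (drop (Suc i) w) @ w ! j # drop (Suc (j - Suc i)) (drop (Suc i) w)"
    using e1 e2 by metis
  have st: "(\<exists>y\<in>set (take (j - Suc i) (drop (Suc i) w)). w ! i < y) \<longleftrightarrow> (\<exists>k. i < k \<and> k < j \<and> w ! i < w ! k)"
  proof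
    assume "\<exists>y\<in>set (take (j - Suc i) (drop (Suc i) w)). w ! i < y"
    then obtain t where "t < length (take (j - Suc i) (drop (Suc i) w))" "w ! i < take (j - Suc i) (drop (Suc i) w) ! t"
      by (metis in_set_conv_nth)
    then show "\<exists>k. i < k \<and> k < j \<and> w ! i < w ! k" using assms
      by (intro exI[of _ "Suc i + t"]) auto
  next
    assume "\<exists>k. i < k \<and> k < j \<and> w ! i < w ! k"
    then obtain k where k: "i < k" "k < j" "w ! i < w ! k" by blast
    have "take (j - Suc i) (drop (Suc i) w) ! (k - Suc i) = w ! k" using k assms by simp
    moreover have "k - Suc i < length (take (j - Suc i) (drop (Suc i) w))" using k assms by simp
    ultimately show "\<exists>y\<in>set (take (j - Suc i) (drop (Suc i) w)). w ! i < y" using k(3)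
      by (metis nth_mem)
  qed
  show ?thesis using key[OF assms(1) e] st by simp
qed

lemma all4: "(\<forall>x<(4::nat). Q x) \<longleftrightarrow> Q 0 \<and> Q 1 \<and> Q 2 \<and> Q 3"
  by (auto simp: numeral_eq_Suc less_Suc_eq)

theorem lemma3p6:
  fixes \<pi> :: "nat list" and ps :: "nat list"
  assumes "is_perm \<pi>"
    and "marked_occ \<pi> [4,3,2,5,1] {(1,4),(1,5),(2,4),(2,5)} {(2,3)} ps"
  shows "\<exists>qs. mesh_occ (stack_sort \<pi>) [3,2,4,1] {(1,4)} qs \<and>
           map (\<lambda>j. stack_sort \<pi> ! (j - 1)) qs =
             [\<pi> ! (ps ! 1 - 1), \<pi> ! (ps ! 2 - 1), \<pi> ! (ps ! 0 - 1), \<pi> ! (ps ! 4 - 1)]"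
proof -
  define n where "n = length \<pi>"
  have dp: "distinct \<pi>" and sp: "set \<pi> = {1..n}" using assms(1) unfolding is_perm_def n_def by auto
  have oc: "occ \<pi> [4,3,2,5,1] ps" and sh: "\<forall>ab\<in>{(1,4),(1,5),(2,4),(2,5)}. box \<pi> ps ab = {}"
    and mk: "box \<pi> ps (2,3) \<noteq> {}"
    using assms(2) unfolding marked_occ_def by auto
  have lp: "length ps = 5" using oc unfolding occ_def by simp
  have "\<exists>p0 p1 p2 p3 p4. ps = [p0,p1,p2,p3,p4]" using lp
    by (simp add: numeral_eq_Suc length_Suc_conv) blast
  then obtain p0 p1 p2 p3 p4 where ps: "ps = [p0,p1,p2,p3,p4]" by blast
  have srt: "p0 < p1" "p1 < p2" "p2 < p3" "p3 < p4" using oc unfolding occ_def ps by auto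
  have rng: "1 \<le> p0" "p4 \<le> n" using oc unfolding occ_def ps n_def by auto
  define i0 where "i0 = p0 - 1"
  define i1 where "i1 = p1 - 1"
  define i2 where "i2 = p2 - 1"
  define i3 where "i3 = p3 - 1"
  define i4 where "i4 = p4 - 1"
  have pe: "p0 = Suc i0" "p1 = Suc i1" "p2 = Suc i2" "p3 = Suc i3" "p4 = Suc i4"
    using srt rng unfolding i0_def i1_def i2_def i3_def i4_def by auto
  have isrt: "i0 < i1" "i1 < i2" "i2 < i3" "i3 < i4" "i4 < n" using srt rng pe by auto
  have ps': "ps = [Suc i0, Suc i1, Suc i2, Suc i3, Suc i4]" using ps pe by simp
  have cmp: "\<And>x y. x < 5 \<Longrightarrow> y < 5 \<Longrightarrow> (\<pi> ! (ps ! x - 1) < \<pi> ! (ps ! y - 1)) = ([4,3,2,5,1::nat] ! x < [4,3,2,5,1] ! y)"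
    using oc unfolding occ_def by auto
  define a where "a = \<pi> ! i4"
  define b where "b = \<pi> ! i2"
  define c where "c = \<pi> ! i1"
  define d where "d = \<pi> ! i0"
  define e where "e = \<pi> ! i3"
  have ab: "a < b" using cmp[of 4 2] unfolding ps' a_def b_def by simp
  have bc: "b < c" using cmp[of 2 1] unfolding ps' b_def c_def by simp
  have cd: "c < d" using cmp[of 1 0] unfolding ps' c_def d_def by simp
  have de: "d < e" using cmp[of 0 3] unfolding ps' d_def e_def by simp
  have srt5: "sort (map (\<lambda>i. \<pi> ! (i - 1)) ps) = [a,b,c,d,e]"
    unfolding ps' using ab bc cd de by (simp add: a_def b_def c_def d_def e_def)
  have vn: "\<And>k. k < n \<Longrightarrow> \<pi> ! k \<le> n" using sp n_def by (metis atLeastAtMost_iff nth_mem)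
  have inj: "\<And>k l. k < n \<Longrightarrow> l < n \<Longrightarrow> \<pi> ! k = \<pi> ! l \<Longrightarrow> k = l"
    using dp n_def nth_eq_iff_index_eq by metis
  have F1: "\<pi> ! k < d" if k: "i0 < k" "k < i2" for k
  proof (cases "k = i1")
    case True then show ?thesis using cd c_def by simp
  next
    case False
    have kn: "k < n" using k isrt by simp
    have "\<pi> ! k \<noteq> d" using inj[of k i0] kn isrt k d_def by auto
    moreover have "\<pi> ! k \<noteq> e" using inj[of k i3] kn isrt k e_def by auto
    moreover have "\<pi> ! k \<le> n" using vn kn .
    moreover have "Suc k \<notin> box \<pi> ps (1,4)" "Suc k \<notin> box \<pi> ps (1,5)"
         "Suc k \<notin> box \<pi> ps (2,4)" "Suc k \<notin> box \<pi> ps (2,5)" using sh by auto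
    then have "\<not> (d < \<pi> ! k \<and> \<pi> ! k < e)" "\<not> (e < \<pi> ! k \<and> \<pi> ! k < n + 1)"
      using k False unfolding box_def Let_def srt5 n_def[symmetric]
      by (auto simp: ps' nth_append)
    ultimately show ?thesis by (metis linorder_neqE_nat less_Suc_eq_le Suc_eq_plus1)
  qed
  have F2: "\<exists>k. i1 < k \<and> k < i2 \<and> c < \<pi> ! k"
  proof -
    obtain x where "x \<in> box \<pi> ps (2,3)" using mk by blast
    then have "p1 < x" "x < p2" "c < \<pi> ! (x - 1)"
      unfolding box_def Let_def srt5 n_def[symmetric] by (auto simp: ps nth_append)
    then show ?thesis using pe by (intro exI[of _ "x - 1"]) auto
  qed
  define S where "S = stack_sort \<pi>"
  have dS: "distinct S" unfolding S_def using dp by (rule ss_distinct)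
  have sS: "set S = set \<pi>" unfolding S_def by (rule ss_set)
  have lS: "length S = n" unfolding S_def n_def by (metis ss_mset mset_eq_length)
  have KN: "\<And>i j. i < j \<Longrightarrow> j < n \<Longrightarrow> bef S (\<pi> ! i) (\<pi> ! j) \<longleftrightarrow> (\<pi> ! i < \<pi> ! j \<or> (\<exists>k. i < k \<and> k < j \<and> \<pi> ! i < \<pi> ! k))"
    unfolding S_def n_def using key_nth[OF dp] by blast
  have K1: "bef S c b" using KN[of i1 i2] isrt F2 unfolding c_def b_def by auto
  have K2: "\<not> bef S d b" using KN[of i0 i2] isrt F1 bc cd unfolding d_def b_def
    by (metis less_trans order_less_asym)
  have inS: "\<And>k. k < n \<Longrightarrow> \<pi> ! k \<in> set S" using sS n_def by simp
  have K2': "bef S b d" using bef_total[OF dS, of b d] K2 inS isrt bc cd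
    unfolding b_def d_def by (metis less_trans order_less_irrefl)
  have K3: "bef S d a" using KN[of i0 i4] isrt de unfolding d_def a_def e_def by (metis less_trans)
  obtain qc where qc: "qc < n" "S ! qc = c" using inS[of i1] isrt c_def lS by (metis in_set_conv_nth less_trans)
  obtain qb where qb: "qb < n" "S ! qb = b" using inS[of i2] isrt b_def lS by (metis in_set_conv_nth less_trans)
  obtain qd where qd: "qd < n" "S ! qd = d" using inS[of i0] isrt d_def lS by (metis in_set_conv_nth less_trans)
  obtain qa where qa: "qa < n" "S ! qa = a" using inS[of i4] isrt a_def lS by (metis in_set_conv_nth)
  have BN: "\<And>p q. p < n \<Longrightarrow> q < n \<Longrightarrow> bef S (S ! p) (S ! q) \<longleftrightarrow> p < q"
    using bef_nth[OF dS] lS by simp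
  have q1: "qc < qb" using BN[OF qc(1) qb(1)] K1 qc qb by simp
  have q2: "qb < qd" using BN[OF qb(1) qd(1)] K2' qb qd by simp
  have q3: "qd < qa" using BN[OF qd(1) qa(1)] K3 qd qa by simp
  define qs where "qs = [Suc qc, Suc qb, Suc qd, Suc qa]"
  have srt4: "sort (map (\<lambda>i. S ! (i - 1)) qs) = [a,b,c,d]"
    unfolding qs_def using ab bc cd qa qb qc qd by simp
  have occS: "occ S [3,2,4,1] qs"
    unfolding occ_def qs_def lS using q1 q2 q3 qa qb qc qd ab bc cd
    by (simp add: All_less_Suc)
  have boxS: "box S qs (1,4) = {}"
  proof (rule ccontr)
    assume "box S qs (1,4) \<noteq> {}"
    then obtain x where "x \<in> box S qs (1,4)" by blast
    then have x: "Suc qc < x" "x < Suc qb" "d < S ! (x - 1)"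
      unfolding box_def Let_def srt4 lS by (auto simp: qs_def nth_append)
    define r where "r = x - 1"
    have r: "qc < r" "r < qb" "d < S ! r" using x unfolding r_def by auto
    have rn: "r < n" using r qb by simp
    define y where "y = S ! r"
    have b1: "bef S c y" using BN[OF qc(1) rn] r qc unfolding y_def by simp
    have b2: "bef S y b" using BN[OF rn qb(1)] r qb unfolding y_def by simp
    have "y \<in> set \<pi>" using rn lS sS unfolding y_def by (metis nth_mem)
    then obtain t where t: "t < n" "\<pi> ! t = y" using n_def by (metis in_set_conv_nth)
    have yd: "d < y" using r y_def by simp
    consider "t < i1" | "t = i1" | "i1 < t \<and> t < i2" | "t = i2" | "i2 < t" by linarith
    then show False
    proof cases
      case 1
      have "\<not> bef S y c" using bef_asym[OF dS b1] .
      then have nc: "\<And>k. t < k \<Longrightarrow> k < i1 \<Longrightarrow> \<pi> ! k \<le> y"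
        using KN[of t i1] 1 isrt t unfolding c_def by (meson leI less_trans)
      have "bef S (\<pi> ! t) (\<pi> ! i2)" using b2 t b_def by simp
      then obtain k where k: "t < k" "k < i2" "y < \<pi> ! k"
        using KN[of t i2] 1 isrt t yd bc cd unfolding b_def by (metis less_trans order_less_asym)
      show False
      proof (cases "k < i1")
        case True then show False using nc[of k] k by simp
      next
        case False
        then have "i0 < k" using isrt by simp
        then have "\<pi> ! k < d" using F1 k by simp
        then show False using k yd by simp
      qed
    next
      case 2 then show False using t yd cd c_def by simp
    next
      case 3 then have "\<pi> ! t < d" using F1 isrt by simp
      then show False using t yd by simp
    next
      case 4 then show False using t yd bc cd b_def by simp
    next
      case 5
      have "bef S b y" using KN[of i2 t] 5 t yd bc cd unfolding b_def by (metis less_trans)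
      then show False using bef_asym[OF dS b2] by simp
    qed
  qed
  have "mesh_occ S [3,2,4,1] {(1,4)} qs" unfolding mesh_occ_def using occS boxS by simp
  moreover have "map (\<lambda>j. S ! (j - 1)) qs =
             [\<pi> ! (ps ! 1 - 1), \<pi> ! (ps ! 2 - 1), \<pi> ! (ps ! 0 - 1), \<pi> ! (ps ! 4 - 1)]"
    unfolding qs_def ps' using qa qb qc qd a_def b_def c_def d_def by simp
  ultimately have "\<exists>qs. mesh_occ S [3,2,4,1] {(1,4)} qs \<and> map (\<lambda>j. S ! (j - 1)) qs =
             [\<pi> ! (ps ! 1 - 1), \<pi> ! (ps ! 2 - 1), \<pi> ! (ps ! 0 - 1), \<pi> ! (ps ! 4 - 1)]" by (intro exI[of _ qs] conjI)
  then show ?thesis by (simp only: S_def)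
qed

end
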